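(* Let $\alpha\in(0,1)$ and consider the continued fraction algorithm on $\mathbb{R}^2$ with lattice $\mathbb{Z}^2$, fundamental domain $K=(-0.5,0.5]\times(-\alpha,1-\alpha]$, and inversion $\iota(x,y)=(x,-y)/(x^2+y^2)$. If $\alpha$ is not a root of a quadratic polynomial over $\mathbb{Z}$, then the system is not serendipitous, and the finite range property fails.
   Context: $[w]$ denotes the unique point of $\mathbb{Z}^2$ with $w-[w]\in K$; $T:K\to K$ is $Tx=\iota x-[\iota x]$ for $x\ne0$, $T0=0$. Cylinders: $C_\emptyset=K$, $C_{as}=K\cap\iota(C_s+a)$ for $a\in\mathbb{Z}^2$. Finite range property: finitely many positive-measure sets $U_1,\dots,U_J\subset K$ such that every nonempty cylinder satisfies $T^{|s|}C_s=U_j$ up to a null set for some $j$. Let $E_0=\partial K$, $E_{i+1}=E_i\cup TE_i$, $E=\bigcup_iE_i$; the system is serendipitous if $E=E_n$ for some $n$ and $K\setminus E$ has finitely many connected components. *)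

theory Defs
  imports "HOL-Analysis.Analysis"
begin

type_synonym pt = "real \<times> real"

definition latt :: "int \<times> int \<Rightarrow> pt" where
  "latt z = (real_of_int (fst z), real_of_int (snd z))"

definition Kdom :: "real \<Rightarrow> pt set" where
  "Kdom \<alpha> = {(x, y). -1/2 < x \<and> x \<le> 1/2 \<and> -\<alpha> < y \<and> y \<le> 1 - \<alpha>}"

definition iota :: "pt \<Rightarrow> pt" where
  "iota p = (fst p / ((fst p)\<^sup>2 + (snd p)\<^sup>2), - snd p / ((fst p)\<^sup>2 + (snd p)\<^sup>2))"

definition nearest :: "real \<Rightarrow> pt \<Rightarrow> int \<times> int" where
  "nearest \<alpha> w = (THE z. w - latt z \<in> Kdom \<alpha>)"

definition Tmap :: "real \<Rightarrow> pt \<Rightarrow> pt" where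
  "Tmap \<alpha> x = (if x = 0 then 0 else iota x - latt (nearest \<alpha> (iota x)))"

text \<open>Cylinders indexed by finite sequences of lattice points; iota is applied
  on the punctured plane (it is undefined at 0).\<close>
fun cyl :: "real \<Rightarrow> (int \<times> int) list \<Rightarrow> pt set" where
  "cyl \<alpha> [] = Kdom \<alpha>"
| "cyl \<alpha> (a # s) = Kdom \<alpha> \<inter> iota ` (((\<lambda>p. p + latt a) ` cyl \<alpha> s) - {0})"

definition finite_range :: "real \<Rightarrow> bool" where
  "finite_range \<alpha> \<longleftrightarrow>
     (\<exists>\<U> :: pt set set. finite \<U> \<and>
        (\<forall>U\<in>\<U>. U \<subseteq> Kdom \<alpha> \<and> U \<in> sets lebesgue \<and> emeasure lebesgue U > 0) \<and>
        (\<forall>s. cyl \<alpha> s \<noteq> {} \<longrightarrow>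
           (\<exists>U\<in>\<U>. let V = (Tmap \<alpha> ^^ length s) ` cyl \<alpha> s in
                     (V - U) \<union> (U - V) \<in> null_sets lebesgue)))"

fun Eset :: "real \<Rightarrow> nat \<Rightarrow> pt set" where
  "Eset \<alpha> 0 = frontier (Kdom \<alpha>)"
| "Eset \<alpha> (Suc i) = Eset \<alpha> i \<union> Tmap \<alpha> ` Eset \<alpha> i"

definition Eall :: "real \<Rightarrow> pt set" where
  "Eall \<alpha> = (\<Union>i. Eset \<alpha> i)"

definition serendipitous :: "real \<Rightarrow> bool" where
  "serendipitous \<alpha> \<longleftrightarrow>
     (\<exists>n. Eall \<alpha> = Eset \<alpha> n) \<and> finite (components (Kdom \<alpha> - Eall \<alpha>))"

end

theory Submission
  imports Defs
begin



lemma iota_iota[simp]: "iota (iota p) = p"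
proof (cases p)
  case (Pair x y)
  show ?thesis
  proof (cases "x\<^sup>2 + y\<^sup>2 = 0")
    case True
    then have "x = 0" "y = 0" by (auto simp: sum_power2_eq_zero_iff)
    then show ?thesis using Pair by (simp add: iota_def)
  next
    case False
    define r where "r = x\<^sup>2 + y\<^sup>2"
    have "(x / r)\<^sup>2 + (- y / r)\<^sup>2 = (x\<^sup>2 + y\<^sup>2) / r\<^sup>2"
      by (simp add: power_divide add_divide_distrib)
    also have "\<dots> = 1 / r" using False unfolding r_def by (simp add: power2_eq_square)
    finally have "(x / (x\<^sup>2 + y\<^sup>2))\<^sup>2 + (- y / (x\<^sup>2 + y\<^sup>2))\<^sup>2 = 1 / (x\<^sup>2 + y\<^sup>2)"
      unfolding r_def .
    then show ?thesis using Pair False by (simp add: iota_def)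
  qed
qed

lemma iota_zero[simp]: "iota 0 = 0"
  by (simp add: iota_def zero_prod_def)

lemma iota_eq_0_iff[simp]: "iota p = 0 \<longleftrightarrow> p = 0"
  by (metis iota_iota iota_zero)

lemma Kdom_iff: "(x, y) \<in> Kdom \<alpha> \<longleftrightarrow> -1/2 < x \<and> x \<le> 1/2 \<and> -\<alpha> < y \<and> y \<le> 1 - \<alpha>"
  by (simp add: Kdom_def)

lemma Kdom_iff': "p \<in> Kdom \<alpha> \<longleftrightarrow> -1/2 < fst p \<and> fst p \<le> 1/2 \<and> -\<alpha> < snd p \<and> snd p \<le> 1 - \<alpha>"
  by (cases p) (simp add: Kdom_def)

lemma latt_fst[simp]: "fst (latt z) = of_int (fst z)" and latt_snd[simp]: "snd (latt z) = of_int (snd z)"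
  by (simp_all add: latt_def)

lemma nearest_unique:
  assumes "w - latt z \<in> Kdom \<alpha>" "w - latt z' \<in> Kdom \<alpha>"
  shows "z = z'"
proof -
  obtain a b where z: "z = (a, b)" by (cases z)
  obtain a' b' where z': "z' = (a', b')" by (cases z')
  from assms have "-1/2 < fst w - a" "fst w - a \<le> 1/2" "-1/2 < fst w - a'" "fst w - a' \<le> 1/2"
    by (auto simp: Kdom_iff' z z')
  then have "of_int a - 1 < (of_int a' :: real)" "of_int a' - 1 < (of_int a :: real)" by auto
  then have "a = a'" by linarith
  from assms have "-\<alpha> < snd w - b" "snd w - b \<le> 1-\<alpha>" "-\<alpha> < snd w - b'" "snd w - b' \<le> 1-\<alpha>"
    by (auto simp: Kdom_iff' z z')
  then have "of_int b - 1 < (of_int b' :: real)" "of_int b' - 1 < (of_int b :: real)" by auto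
  then have "b = b'" by linarith
  show ?thesis using \<open>a = a'\<close> \<open>b = b'\<close> z z' by simp
qed

lemma nearest_exists: "\<exists>z. w - latt z \<in> Kdom \<alpha>"
proof -
  define a where "a = \<lceil>fst w - 1/2\<rceil>"
  define b where "b = \<lceil>snd w - (1 - \<alpha>)\<rceil>"
  have "fst w - 1/2 \<le> a" "a < fst w - 1/2 + 1" unfolding a_def by linarith+
  moreover have "snd w - (1-\<alpha>) \<le> b" "b < snd w - (1-\<alpha>) + 1" unfolding b_def by linarith+
  ultimately have "w - latt (a, b) \<in> Kdom \<alpha>" by (auto simp: Kdom_iff')
  then show ?thesis by blast
qed

lemma nearest_eq: "w - latt z \<in> Kdom \<alpha> \<Longrightarrow> nearest \<alpha> w = z"
  unfolding nearest_def by (rule the_equality) (auto intro: nearest_unique)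

lemma nearest_in: "w - latt (nearest \<alpha> w) \<in> Kdom \<alpha>"
  using nearest_exists nearest_eq by metis

lemma Tmap_eq: "x \<noteq> 0 \<Longrightarrow> iota x - latt a \<in> Kdom \<alpha> \<Longrightarrow> Tmap \<alpha> x = iota x - latt a"
  by (simp add: Tmap_def nearest_eq)

lemma Tmap_in: "0 < \<alpha> \<Longrightarrow> \<alpha> < 1 \<Longrightarrow> Tmap \<alpha> x \<in> Kdom \<alpha>"
  using nearest_in[of "iota x" \<alpha>] by (auto simp: Tmap_def Kdom_iff')


locale cf =
  fixes \<alpha> :: real
  assumes a0: "0 < \<alpha>" and a1: "\<alpha> < 1"
    and nq: "\<not> (\<exists>a b c :: int. (a, b, c) \<noteq> (0, 0, 0) \<and> of_int a * \<alpha>\<^sup>2 + of_int b * \<alpha> + of_int c = 0)"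
begin

abbreviation "bet \<equiv> 1 - \<alpha>"

lemma nqb:
  assumes "(a::int, b, c) \<noteq> (0, 0, 0)"
  shows "of_int a * bet\<^sup>2 + of_int b * bet + of_int c \<noteq> 0"
proof
  assume h: "of_int a * bet\<^sup>2 + of_int b * bet + of_int c = 0"
  have "of_int a * \<alpha>\<^sup>2 + of_int (-2 * a - b) * \<alpha> + of_int (a + b + c) = of_int a * bet\<^sup>2 + of_int b * bet + of_int c"
    by (simp add: power2_eq_square algebra_simps)
  also have "\<dots> = 0" by (rule h)
  finally have "(a, -2 * a-b, a+b+c) = (0,0,0)" using nq by blast
  then show False using assms by auto
qed

lemma nqlin:
  assumes "(b::int, c) \<noteq> (0, 0)"
  shows "of_int b * bet + of_int c \<noteq> 0"
  using nqb[of 0 b c] assms by simp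

primrec ys :: "nat \<Rightarrow> real" where
  "ys 0 = 1 - \<alpha>"
| "ys (Suc k) = -1/ys k - of_int \<lceil>-1/ys k - (1-\<alpha>)\<rceil>"

definition ms :: "nat \<Rightarrow> int" where "ms k = \<lceil>-1/ys k - (1-\<alpha>)\<rceil>"

lemma ys_Suc: "ys (Suc k) = -1/ys k - of_int (ms k)"
  by (simp add: ms_def)

declare ys.simps(2)[simp del]

fun stp :: "int \<Rightarrow> int\<times>int\<times>int\<times>int \<Rightarrow> int\<times>int\<times>int\<times>int" where
  "stp m (p1,p2,p3,p4) = (-p3 - m * p1, -p4 - m * p2, p1, p2)"

primrec mats :: "nat \<Rightarrow> int\<times>int\<times>int\<times>int" where
  "mats 0 = (0,1,1,0)"
| "mats (Suc k) = stp (ms k) (mats k)"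

definition NN :: "nat \<Rightarrow> real" where "NN k = (case mats k of (u,v,w,x) \<Rightarrow> of_int u + of_int v * bet)"
definition DD :: "nat \<Rightarrow> real" where "DD k = (case mats k of (u,v,w,x) \<Rightarrow> of_int w + of_int x * bet)"

lemma det_mats: "mats k = (u,v,w,x) \<Longrightarrow> u * x - v * w = -1"
proof (induction k arbitrary: u v w x)
  case 0
  then show ?case by simp
next
  case (Suc k)
  obtain u0 v0 w0 x0 where m: "mats k = (u0,v0,w0,x0)" by (cases "mats k") auto
  have e: "u = -w0 - ms k * u0" "v = -x0 - ms k * v0" "w = u0" "x = v0" using Suc.prems m by auto
  have "u * x - v * w = u0 * x0 - v0 * w0" unfolding e by (simp add: algebra_simps)
  with Suc.IH[OF m] show ?case by simp
qed

lemma NN_nz: "NN k \<noteq> 0"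
proof -
  obtain u v w x where m: "mats k = (u,v,w,x)" by (cases "mats k") auto
  have "(v, u) \<noteq> (0,0)" using det_mats[OF m] by auto
  from nqlin[OF this] show ?thesis by (simp add: NN_def m add.commute)
qed

lemma DD_nz: "DD k \<noteq> 0"
proof -
  obtain u v w x where m: "mats k = (u,v,w,x)" by (cases "mats k") auto
  have "(x, w) \<noteq> (0,0)" using det_mats[OF m] by auto
  from nqlin[OF this] show ?thesis by (simp add: DD_def m add.commute)
qed

lemma NN_Suc: "NN (Suc k) = - DD k - of_int (ms k) * NN k"
  by (cases "mats k") (auto simp: NN_def DD_def algebra_simps)

lemma DD_Suc: "DD (Suc k) = NN k"
  by (cases "mats k") (auto simp: NN_def DD_def algebra_simps)

lemma ys_DD: "ys k * DD k = NN k"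
proof (induction k)
  case 0
  then show ?case by (simp add: NN_def DD_def)
next
  case (Suc k)
  have yk: "ys k \<noteq> 0" using Suc NN_nz by auto
  have "ys (Suc k) * DD (Suc k) = (-1/ys k - of_int (ms k)) * NN k" by (simp add: ys_Suc DD_Suc)
  also have "\<dots> = - (NN k / ys k) - of_int (ms k) * NN k" by (simp add: algebra_simps)
  also have "NN k / ys k = DD k" using Suc.IH yk by (auto simp: field_simps)
  finally show ?case by (simp add: NN_Suc)
qed

lemma ys_nz: "ys k \<noteq> 0"
  using ys_DD[of k] NN_nz[of k] by auto

lemma ys_bounds: "-\<alpha> < ys k \<and> ys k \<le> 1 - \<alpha>"
proof (cases k)
  case 0
  then show ?thesis using a0 by simp
next
  case (Suc j)
  have "-1/ys j - (1-\<alpha>) \<le> of_int (ms j)" "of_int (ms j) < -1/ys j - (1-\<alpha>) + 1"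
    unfolding ms_def by linarith+
  then show ?thesis using Suc by (simp add: ys_Suc)
qed

lemma ys_abs: "\<bar>ys k\<bar> < 1"
  using ys_bounds[of k] a0 a1 by auto

lemma DD_dec: "\<bar>DD (Suc k)\<bar> < \<bar>DD k\<bar>"
proof -
  have "\<bar>DD (Suc k)\<bar> = \<bar>ys k\<bar> * \<bar>DD k\<bar>" by (simp add: DD_Suc ys_DD[symmetric] abs_mult)
  also have "\<dots> < 1 * \<bar>DD k\<bar>" using ys_abs[of k] DD_nz[of k] by (intro mult_strict_right_mono) auto
  finally show ?thesis by simp
qed

lemma DD_dec': "k < l \<Longrightarrow> \<bar>DD l\<bar> < \<bar>DD k\<bar>"
  using lift_Suc_mono_less[of "\<lambda>n. - \<bar>DD n\<bar>"] DD_dec by force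

lemma parallel2:
  fixes v x v' x' :: real
  assumes "v * x' = v' * x" "(v, x) \<noteq> (0,0)"
  shows "\<exists>l. v' = l * v \<and> x' = l * x"
proof (cases "v = 0")
  case True
  then have "x \<noteq> 0" using assms by auto
  then show ?thesis using assms True by (intro exI[of _ "x'/x"]) (auto simp: field_simps)
next
  case False
  then show ?thesis using assms by (intro exI[of _ "v'/v"]) (auto simp: field_simps)
qed

lemma ys_inj_aux: "k < l \<Longrightarrow> ys k \<noteq> ys l"
proof
  assume kl: "k < l" and eq: "ys k = ys l"
  obtain u v w x where m: "mats k = (u,v,w,x)" by (cases "mats k") auto
  obtain u' v' w' x' where m': "mats l = (u',v',w',x')" by (cases "mats l") auto
  have "NN k * DD l = NN l * DD k"
    using ys_DD[of k] ys_DD[of l] eq by (metis mult.assoc mult.commute)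
  then have "of_int (v * x' - v' * x) * bet\<^sup>2 + of_int (u * x' + v * w' - u' * x - v' * w) * bet + of_int (u * w' - u' * w) = 0"
    by (simp add: NN_def DD_def m m' power2_eq_square algebra_simps)
  then have "(v * x' - v' * x, u * x' + v * w' - u' * x - v' * w, u * w' - u' * w) = (0,0,0)"
    using nqb by blast
  then have e2: "real_of_int v * real_of_int x' = real_of_int v' * real_of_int x"
     and e0: "real_of_int u * real_of_int w' = real_of_int u' * real_of_int w"
     and e1: "real_of_int u * real_of_int x' + real_of_int v * real_of_int w' = real_of_int u' * real_of_int x + real_of_int v' * real_of_int w"
    by (auto simp flip: of_int_mult of_int_add)
  have d: "real_of_int u * real_of_int x - real_of_int v * real_of_int w = -1" "real_of_int u' * real_of_int x' - real_of_int v' * real_of_int w' = -1"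
    using det_mats[OF m] det_mats[OF m'] by (metis of_int_mult of_int_diff of_int_minus of_int_1)+
  have "(real_of_int v, real_of_int x) \<noteq> (0,0)" using d by auto
  from parallel2[OF e2 this] obtain l1 :: real where l1: "real_of_int v' = l1 * real_of_int v" "real_of_int x' = l1 * real_of_int x" by blast
  have "(real_of_int u, real_of_int w) \<noteq> (0,0)" using d by auto
  from parallel2[OF e0 this] obtain l2 :: real where l2: "real_of_int u' = l2 * real_of_int u" "real_of_int w' = l2 * real_of_int w" by blast
  have "(l1 - l2) * (real_of_int u * real_of_int x - real_of_int v * real_of_int w) = 0"
    using e1 l1 l2 by (simp add: algebra_simps)
  then have "l1 = l2" using d by simp
  then have "l1 * l1 * (real_of_int u * real_of_int x - real_of_int v * real_of_int w) = real_of_int u' * real_of_int x' - real_of_int v' * real_of_int w'"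
    using l1 l2 by (simp add: algebra_simps)
  then have "l1 * l1 = 1" using d by simp
  then have "l1 = 1 \<or> l1 = -1" using power2_eq_1_iff[of l1] by (simp add: power2_eq_square)
  then have al: "\<bar>l1\<bar> = 1" by auto
  have "DD l = l1 * DD k" using l1 l2 \<open>l1 = l2\<close> by (simp add: DD_def m m' algebra_simps)
  then have "\<bar>DD l\<bar> = \<bar>DD k\<bar>" using al by (simp add: abs_mult)
  with DD_dec'[OF kl] show False by simp
qed

lemma ys_inj: "ys k = ys l \<longleftrightarrow> k = l"
  using ys_inj_aux[of k l] ys_inj_aux[of l k] by (cases k l rule: linorder_cases) auto

lemma ys_Suc_lt: "ys (Suc k) < 1 - \<alpha>"
  using ys_bounds[of "Suc k"] ys_inj[of "Suc k" 0] by fastforce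


definition P :: "nat \<Rightarrow> pt" where "P k = (0, ys k)"
definition dg :: "nat \<Rightarrow> int \<times> int" where "dg k = (0, ms k)"
definition la :: "nat \<Rightarrow> pt" where "la k = latt (dg k)"

lemma la_eq: "la k = (0, of_int (ms k))" by (simp add: la_def dg_def latt_def)

lemma iota_0y: "iota (0, y) = (0, -1/y)"
  by (simp add: iota_def power2_eq_square)

lemma iota_P: "iota (P k) = (0, -1/ys k)" by (simp add: P_def iota_0y)

lemma P_Suc: "P (Suc k) = iota (P k) - la k"
  by (simp add: iota_0y la_eq P_def ys_Suc)

lemma P_in_K: "P k \<in> Kdom \<alpha>"
  using ys_bounds[of k] by (simp add: P_def Kdom_iff)

lemma P_nz: "P k \<noteq> 0"
  using ys_nz[of k] by (simp add: P_def zero_prod_def)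

lemma nearest_P: "nearest \<alpha> (iota (P k)) = dg k"
  using P_in_K[of "Suc k"] by (intro nearest_eq) (simp add: P_Suc la_def)

lemma Tmap_P: "Tmap \<alpha> (P k) = P (Suc k)"
  by (simp add: Tmap_def P_nz nearest_P P_Suc la_def)

lemma ms_nz: "ms k \<noteq> 0"
proof
  assume "ms k = 0"
  then have "ys (Suc k) = -1/ys k" by (simp add: ys_Suc)
  then have "\<bar>1/ys k\<bar> < 1" using ys_abs[of "Suc k"] by simp
  moreover have "\<bar>1/ys k\<bar> = 1/\<bar>ys k\<bar>" by simp
  moreover have "1 < 1/\<bar>ys k\<bar>" using ys_abs[of k] ys_nz[of k] by (simp add: less_divide_eq_1_pos)
  ultimately show False by simp
qed

definition Kint :: "pt set" where "Kint = {(x,y). -1/2 < x \<and> x < 1/2 \<and> -\<alpha> < y \<and> y < 1 - \<alpha>}"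
definition Kc :: "pt set" where "Kc = {(x,y). -1/2 \<le> x \<and> x \<le> 1/2 \<and> -\<alpha> \<le> y \<and> y \<le> 1 - \<alpha>}"

lemma Kint_alt: "Kint = {p. -1/2 < fst p \<and> fst p < 1/2 \<and> -\<alpha> < snd p \<and> snd p < 1 - \<alpha>}"
  by (auto simp: Kint_def)
lemma Kc_alt: "Kc = {p. -1/2 \<le> fst p \<and> fst p \<le> 1/2 \<and> -\<alpha> \<le> snd p \<and> snd p \<le> 1 - \<alpha>}"
  by (auto simp: Kc_def)

lemma open_Kint: "open Kint"
  unfolding Kint_alt
  by (intro open_Collect_conj open_Collect_less continuous_intros)

lemma closed_Kc: "closed Kc"
  unfolding Kc_alt
  by (intro closed_Collect_conj closed_Collect_le continuous_intros)

lemma Kint_sub: "Kint \<subseteq> Kdom \<alpha>" by (auto simp: Kint_def Kdom_def)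
lemma K_sub_Kc: "Kdom \<alpha> \<subseteq> Kc" by (auto simp: Kc_def Kdom_def)
lemma closure_K: "closure (Kdom \<alpha>) \<subseteq> Kc" using closure_minimal[OF K_sub_Kc closed_Kc] .
lemma interior_K: "Kint \<subseteq> interior (Kdom \<alpha>)" using interior_maximal[OF Kint_sub open_Kint] .

lemma P_Suc_Kint: "P (Suc k) \<in> Kint"
  using ys_bounds[of "Suc k"] ys_Suc_lt[of k] by (simp add: P_def Kint_def)

lemma la_notin: "- la k \<notin> Kc"
proof
  assume "- la k \<in> Kc"
  then have "-\<alpha> \<le> - of_int (ms k)" "- of_int (ms k) \<le> 1 - \<alpha>" by (auto simp: la_eq Kc_def)
  then have "\<bar>of_int (ms k)\<bar> < (1::real)" using a0 a1 by auto
  then show False using ms_nz[of k] by linarith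
qed

end

lemma cyl_Cons_iff: "x \<in> cyl \<alpha> (a # s) \<longleftrightarrow> x \<in> Kdom \<alpha> \<and> x \<noteq> 0 \<and> iota x - latt a \<in> cyl \<alpha> s"
proof
  assume "x \<in> cyl \<alpha> (a # s)"
  then have xK: "x \<in> Kdom \<alpha>" and "x \<in> iota ` ((\<lambda>p. p + latt a) ` cyl \<alpha> s - {0})" by auto
  then obtain w where w: "w \<in> (\<lambda>p. p + latt a) ` cyl \<alpha> s" "w \<noteq> 0" "x = iota w" by blast
  then obtain p where p: "p \<in> cyl \<alpha> s" "w = p + latt a" by blast
  have "iota x = w" using w by simp
  then have "iota x - latt a = p" using p by simp
  then show "x \<in> Kdom \<alpha> \<and> x \<noteq> 0 \<and> iota x - latt a \<in> cyl \<alpha> s" using xK w p by auto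
next
  assume h: "x \<in> Kdom \<alpha> \<and> x \<noteq> 0 \<and> iota x - latt a \<in> cyl \<alpha> s"
  then have "iota x \<in> (\<lambda>p. p + latt a) ` cyl \<alpha> s - {0}"
    by (auto intro!: image_eqI[of _ _ "iota x - latt a"])
  then have "x \<in> iota ` ((\<lambda>p. p + latt a) ` cyl \<alpha> s - {0})"
    by (intro image_eqI[of _ _ "iota x"]) auto
  with h show "x \<in> cyl \<alpha> (a # s)" by simp
qed

lemma cyl_sub: "cyl \<alpha> s \<subseteq> Kdom \<alpha>"
  by (cases s) auto

declare cyl.simps(2)[simp del]

lemma Tmap_cyl: "x \<in> cyl \<alpha> (a # s) \<Longrightarrow> Tmap \<alpha> x = iota x - latt a"
  using cyl_sub[of \<alpha> s] by (intro Tmap_eq) (auto simp: cyl_Cons_iff)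

lemma cyl_snoc: "cyl \<alpha> (s @ [a]) = {x \<in> cyl \<alpha> s. (Tmap \<alpha> ^^ length s) x \<in> cyl \<alpha> [a]}"
proof (induction s)
  case Nil
  then show ?case using cyl_sub[of \<alpha> "[a]"] by auto
next
  case (Cons b s)
  show ?case
  proof (intro set_eqI iffI)
    fix x assume "x \<in> cyl \<alpha> ((b # s) @ [a])"
    then have h: "x \<in> Kdom \<alpha>" "x \<noteq> 0" "iota x - latt b \<in> cyl \<alpha> (s @ [a])"
      by (auto simp: cyl_Cons_iff)
    then have xc: "x \<in> cyl \<alpha> (b # s)" using Cons.IH by (auto simp: cyl_Cons_iff)
    have "(Tmap \<alpha> ^^ length (b # s)) x = (Tmap \<alpha> ^^ length s) (Tmap \<alpha> x)"
      by (simp add: funpow_Suc_right del: funpow.simps)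
    also have "Tmap \<alpha> x = iota x - latt b" using Tmap_cyl[OF xc] .
    finally show "x \<in> {x \<in> cyl \<alpha> (b # s). (Tmap \<alpha> ^^ length (b # s)) x \<in> cyl \<alpha> [a]}"
      using h Cons.IH xc by auto
  next
    fix x assume "x \<in> {x \<in> cyl \<alpha> (b # s). (Tmap \<alpha> ^^ length (b # s)) x \<in> cyl \<alpha> [a]}"
    then have xc: "x \<in> cyl \<alpha> (b # s)" and t: "(Tmap \<alpha> ^^ length (b # s)) x \<in> cyl \<alpha> [a]" by auto
    have "(Tmap \<alpha> ^^ length (b # s)) x = (Tmap \<alpha> ^^ length s) (Tmap \<alpha> x)"
      by (simp add: funpow_Suc_right del: funpow.simps)
    also have "Tmap \<alpha> x = iota x - latt b" using Tmap_cyl[OF xc] .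
    finally show "x \<in> cyl \<alpha> ((b # s) @ [a])"
      using xc t Cons.IH by (auto simp: cyl_Cons_iff)
  qed
qed

context cf begin

lemma img_sub_K: "(Tmap \<alpha> ^^ n) ` cyl \<alpha> s \<subseteq> Kdom \<alpha>"
proof (cases n)
  case 0
  then show ?thesis using cyl_sub by simp
next
  case (Suc m)
  then show ?thesis using Tmap_in[OF a0 a1] by (simp add: image_subset_iff)
qed

lemma img_snoc: "(Tmap \<alpha> ^^ length (s @ [a])) ` cyl \<alpha> (s @ [a])
   = {y \<in> Kdom \<alpha>. y + latt a \<noteq> 0 \<and> iota (y + latt a) \<in> (Tmap \<alpha> ^^ length s) ` cyl \<alpha> s}"
proof -
  let ?X = "(Tmap \<alpha> ^^ length s) ` cyl \<alpha> s"
  have "(Tmap \<alpha> ^^ length (s @ [a])) ` cyl \<alpha> (s @ [a]) = Tmap \<alpha> ` ((Tmap \<alpha> ^^ length s) ` cyl \<alpha> (s @ [a]))"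
    by (simp add: image_comp)
  also have "(Tmap \<alpha> ^^ length s) ` cyl \<alpha> (s @ [a]) = ?X \<inter> cyl \<alpha> [a]"
    unfolding cyl_snoc by auto
  also have "Tmap \<alpha> ` (?X \<inter> cyl \<alpha> [a]) = {y \<in> Kdom \<alpha>. y + latt a \<noteq> 0 \<and> iota (y + latt a) \<in> ?X}"
  proof (intro set_eqI iffI)
    fix y assume "y \<in> Tmap \<alpha> ` (?X \<inter> cyl \<alpha> [a])"
    then obtain w where w: "w \<in> ?X" "w \<in> cyl \<alpha> [a]" "y = Tmap \<alpha> w" by auto
    have "y = iota w - latt a" using Tmap_cyl[OF w(2)] w(3) by simp
    moreover have "w \<noteq> 0" "iota w - latt a \<in> Kdom \<alpha>" using w(2) by (auto simp: cyl_Cons_iff)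
    ultimately show "y \<in> {y \<in> Kdom \<alpha>. y + latt a \<noteq> 0 \<and> iota (y + latt a) \<in> ?X}"
      using w(1) by auto
  next
    fix y assume y: "y \<in> {y \<in> Kdom \<alpha>. y + latt a \<noteq> 0 \<and> iota (y + latt a) \<in> ?X}"
    let ?w = "iota (y + latt a)"
    have "?w \<in> Kdom \<alpha>" using y img_sub_K by blast
    then have wc: "?w \<in> cyl \<alpha> [a]" using y by (auto simp: cyl_Cons_iff)
    have "Tmap \<alpha> ?w = y" using Tmap_cyl[OF wc] by simp
    moreover have "?w \<in> ?X \<inter> cyl \<alpha> [a]" using wc y by blast
    ultimately show "y \<in> Tmap \<alpha> ` (?X \<inter> cyl \<alpha> [a])" by (metis image_eqI)
  qed
  finally show ?thesis .
qed

primrec Vs :: "nat \<Rightarrow> pt set" where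
  "Vs 0 = Kdom \<alpha>"
| "Vs (Suc k) = {y \<in> Kdom \<alpha>. y + la k \<noteq> 0 \<and> iota (y + la k) \<in> Vs k}"

definition sdig :: "nat \<Rightarrow> (int \<times> int) list" where "sdig k = map dg [0..<k]"

lemma length_sdig[simp]: "length (sdig k) = k" by (simp add: sdig_def)

lemma Vs_eq: "(Tmap \<alpha> ^^ k) ` cyl \<alpha> (sdig k) = Vs k"
proof (induction k)
  case 0
  then show ?case by (simp add: sdig_def)
next
  case (Suc k)
  have s: "sdig (Suc k) = sdig k @ [dg k]" by (simp add: sdig_def)
  have "(Tmap \<alpha> ^^ Suc k) ` cyl \<alpha> (sdig (Suc k)) = {y \<in> Kdom \<alpha>. y + latt (dg k) \<noteq> 0 \<and> iota (y + latt (dg k)) \<in> (Tmap \<alpha> ^^ k) ` cyl \<alpha> (sdig k)}"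
    using img_snoc[of "sdig k" "dg k"] unfolding s by (simp only: length_append_singleton length_sdig)
  then show ?case using Suc.IH by (simp add: la_def)
qed

lemma Vs_sub: "Vs k \<subseteq> Kdom \<alpha>" by (cases k) auto

lemma P_in_Vs: "P k \<in> Vs k"
proof (induction k)
  case 0
  then show ?case using P_in_K by simp
next
  case (Suc k)
  have "P (Suc k) + la k = iota (P k)" by (simp add: P_Suc)
  then show ?case using Suc.IH P_in_K P_nz by simp
qed

end





lemma sumsq_nz: "(p::pt) \<noteq> 0 \<Longrightarrow> (fst p)\<^sup>2 + (snd p)\<^sup>2 \<noteq> 0"
  by (cases p) (auto simp: zero_prod_def sum_power2_eq_zero_iff)

lemma cont_iota: "continuous_on (-{0}) iota"
  unfolding iota_def by (intro continuous_intros) (auto dest: sumsq_nz)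

lemma open_vimage_G:
  assumes "open G" "continuous_on G f" "open B"
  shows "open {y \<in> G. f y \<in> B}"
proof -
  have "open (f -` B \<inter> G)" using assms continuous_on_open_vimage by blast
  moreover have "{y \<in> G. f y \<in> B} = f -` B \<inter> G" by auto
  ultimately show ?thesis by simp
qed

lemma frontier_vimage:
  assumes "open G" "continuous_on G f"
  shows "frontier {y \<in> G. f y \<in> V} \<subseteq> (-G) \<union> {y \<in> G. f y \<in> frontier V}"
proof
  fix y assume yf: "y \<in> frontier {y \<in> G. f y \<in> V}"
  show "y \<in> (-G) \<union> {y \<in> G. f y \<in> frontier V}"
  proof (rule ccontr)
    assume "\<not> ?thesis"
    then have yG: "y \<in> G" and nf: "f y \<notin> frontier V" by auto
    show False
    proof (cases "f y \<in> interior V")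
      case True
      let ?O = "{y \<in> G. f y \<in> interior V}"
      have "open ?O" using open_vimage_G[OF assms open_interior] .
      moreover have "?O \<subseteq> {y \<in> G. f y \<in> V}" using interior_subset by blast
      ultimately have "y \<in> interior {y \<in> G. f y \<in> V}" using yG True interior_maximal by blast
      then show False using yf by (simp add: frontier_def)
    next
      case False
      then have "f y \<notin> closure V" using nf by (simp add: frontier_def)
      let ?O = "{y \<in> G. f y \<in> - closure V}"
      have "open ?O" using open_vimage_G[OF assms open_Compl[OF closed_closure]] .
      moreover have "?O \<inter> {y \<in> G. f y \<in> V} = {}" using closure_subset by blast
      ultimately have "?O \<inter> closure {y \<in> G. f y \<in> V} = {}" using open_Int_closure_eq_empty by blast
      moreover have "y \<in> ?O" using yG \<open>f y \<notin> closure V\<close> by simp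
      ultimately show False using yf by (auto simp: frontier_def)
    qed
  qed
qed

lemma frontier_K_E: "frontier (Kdom a) \<subseteq> Eall a"
proof -
  have "Eset a 0 \<subseteq> (\<Union>i. Eset a i)" by blast
  then show ?thesis by (simp add: Eall_def)
qed

lemma T_E: "x \<in> Eall a \<Longrightarrow> Tmap a x \<in> Eall a"
proof -
  assume "x \<in> Eall a"
  then obtain n where "x \<in> Eset a n" by (auto simp: Eall_def)
  then have "Tmap a x \<in> Eset a (Suc n)" by simp
  then show ?thesis unfolding Eall_def by blast
qed

context cf begin

definition Phi :: "nat \<Rightarrow> pt \<Rightarrow> pt" where "Phi k y = iota (y + la k)"
definition G :: "nat \<Rightarrow> pt set" where "G k = {y. y + la k \<noteq> 0}"

lemma open_G: "open (G k)"
proof -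
  have "G k = - {- la k}" by (auto simp: G_def eq_neg_iff_add_eq_0)
  then show ?thesis using open_Compl[OF closed_singleton] by simp
qed

lemma cont_Phi: "continuous_on (G k) (Phi k)"
  unfolding Phi_def
  by (rule continuous_on_compose2[OF cont_iota continuous_on_add[OF continuous_on_id continuous_on_const]])
     (auto simp: G_def)

lemma Vs_Suc': "Vs (Suc k) = Kdom \<alpha> \<inter> {y \<in> G k. Phi k y \<in> Vs k}"
  by (auto simp: G_def Phi_def)

lemma frontier_Vs_E: "frontier (Vs k) \<subseteq> Eall \<alpha>"
proof (induction k)
  case 0
  then show ?case using frontier_K_E by simp
next
  case (Suc k)
  show ?case
  proof
    fix y assume yf: "y \<in> frontier (Vs (Suc k))"
    have "y \<in> closure (Vs (Suc k))" using yf by (simp add: frontier_def)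
    then have "y \<in> closure (Kdom \<alpha>)" using closure_mono[OF Vs_sub] by blast
    then have yKc: "y \<in> Kc" using closure_K by blast
    have "y \<in> frontier (Kdom \<alpha>) \<or> y \<in> frontier {y \<in> G k. Phi k y \<in> Vs k}"
      using yf frontier_Int_subset unfolding Vs_Suc' by blast
    then show "y \<in> Eall \<alpha>"
    proof
      assume "y \<in> frontier (Kdom \<alpha>)"
      then show ?thesis using frontier_K_E by blast
    next
      assume "y \<in> frontier {y \<in> G k. Phi k y \<in> Vs k}"
      then have "y \<in> (- G k) \<union> {y \<in> G k. Phi k y \<in> frontier (Vs k)}"
        using frontier_vimage[OF open_G cont_Phi] by blast
      moreover have "y \<in> G k"
      proof (rule ccontr)
        assume "y \<notin> G k"
        then have "y + la k = 0" by (simp add: G_def)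
        then have "y = - la k" using eq_neg_iff_add_eq_0 by blast
        then show False using yKc la_notin by simp
      qed
      ultimately have yG: "y + la k \<noteq> 0" and fr: "Phi k y \<in> Eall \<alpha>" using Suc.IH by (auto simp: G_def)
      show ?thesis
      proof (cases "y \<in> Kdom \<alpha>")
        case True
        have "Tmap \<alpha> (Phi k y) = y"
          using True yG by (subst Tmap_eq[of _ "dg k"]) (auto simp: Phi_def la_def)
        then show ?thesis using T_E[OF fr] by simp
      next
        case False
        then have "y \<in> frontier (Kdom \<alpha>)"
          using \<open>y \<in> closure (Kdom \<alpha>)\<close> interior_subset by (auto simp: frontier_def)
        then show ?thesis using frontier_K_E by blast
      qed
    qed
  qed
qed

end




type_synonym vec4 = "real \<times> real \<times> real \<times> real"

fun gc :: "vec4 \<Rightarrow> pt set" where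
  "gc (A,B,C,D) = {p. A * ((fst p)\<^sup>2 + (snd p)\<^sup>2) + B * fst p + C * snd p + D = 0}"

lemma quad_zero:
  fixes a b c :: real
  assumes "infinite {t. a * t\<^sup>2 + b * t + c = 0}"
  shows "a = 0 \<and> b = 0 \<and> c = 0"
proof -
  obtain S where S: "finite S" "card S = 3" "S \<subseteq> {t. a * t\<^sup>2 + b * t + c = 0}"
    using infinite_arbitrarily_large[OF assms] by blast
  then obtain t1 t2 t3 where t: "S = {t1,t2,t3}" "t1 \<noteq> t2" "t2 \<noteq> t3" "t1 \<noteq> t3"
    by (auto simp: card_3_iff)
  have r: "a * t1\<^sup>2 + b * t1 + c = 0" "a * t2\<^sup>2 + b * t2 + c = 0" "a * t3\<^sup>2 + b * t3 + c = 0"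
    using S(3) t(1) by auto
  have "(t1 - t2) * (a * (t1 + t2) + b) = 0" using r(1,2) by (simp add: power2_eq_square algebra_simps)
  then have e1: "a * (t1 + t2) + b = 0" using t by simp
  have "(t1 - t3) * (a * (t1 + t3) + b) = 0" using r(1,3) by (simp add: power2_eq_square algebra_simps)
  then have e2: "a * (t1 + t3) + b = 0" using t by simp
  have "a * (t2 - t3) = (a * (t1 + t2) + b) - (a * (t1 + t3) + b)" by (simp add: algebra_simps)
  then have "a * (t2 - t3) = 0" using e1 e2 by simp
  then have a: "a = 0" using t by simp
  then have "b = 0" using e1 by simp
  then show ?thesis using a r by simp
qed

lemma line_circle:
  assumes bc: "b \<noteq> 0 \<or> c \<noteq> 0"
    and inf: "infinite {p. b * fst p + c * snd p + d = 0 \<and> p \<in> gc (A,B,C,D)}"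
  shows "A = 0"
proof (cases "c = 0")
  case False
  let ?S = "{p. b * fst p + c * snd p + d = 0 \<and> p \<in> gc (A,B,C,D)}"
  have sn: "snd p = - (b * fst p + d) / c" if "p \<in> ?S" for p
  proof -
    have "b * fst p + c * snd p + d = 0" using that by blast
    then have e: "c * snd p = - (b * fst p + d)" by linarith
    have "snd p = (c * snd p) / c" using False by simp
    also have "\<dots> = - (b * fst p + d) / c" using e by simp
    finally show ?thesis .
  qed
  have "inj_on fst ?S"
  proof
    fix p q assume pq: "p \<in> ?S" "q \<in> ?S" "fst p = fst q"
    have "snd p = snd q" using sn[OF pq(1)] sn[OF pq(2)] pq(3) by simp
    then show "p = q" using pq(3) by (simp add: prod_eq_iff)
  qed
  then have "infinite (fst ` ?S)" using inf finite_imageD by blast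
  moreover have "fst ` ?S \<subseteq> {x. (A * (c\<^sup>2 + b\<^sup>2)) * x\<^sup>2 + (2 * A * b * d + B * c\<^sup>2 - C * c * b) * x + (A * d\<^sup>2 - C * c * d + D * c\<^sup>2) = 0}"
  proof
    fix x assume "x \<in> fst ` ?S"
    then obtain p where p: "p \<in> ?S" "x = fst p" by blast
    have cy: "c * snd p = - (b * x + d)" using p by simp
    have "A * (x\<^sup>2 + (snd p)\<^sup>2) + B * x + C * snd p + D = 0" using p by simp
    then have "c\<^sup>2 * (A * (x\<^sup>2 + (snd p)\<^sup>2) + B * x + C * snd p + D) = 0" by simp
    moreover have "c\<^sup>2 * (A * (x\<^sup>2 + (snd p)\<^sup>2) + B * x + C * snd p + D)
       = A * c\<^sup>2 * x\<^sup>2 + A * (c * snd p)\<^sup>2 + B * c\<^sup>2 * x + C * c * (c * snd p) + D * c\<^sup>2"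
      by (simp add: power2_eq_square algebra_simps)
    moreover have "A * c\<^sup>2 * x\<^sup>2 + A * (c * snd p)\<^sup>2 + B * c\<^sup>2 * x + C * c * (c * snd p) + D * c\<^sup>2
       = (A * (c\<^sup>2 + b\<^sup>2)) * x\<^sup>2 + (2 * A * b * d + B * c\<^sup>2 - C * c * b) * x + (A * d\<^sup>2 - C * c * d + D * c\<^sup>2)"
      unfolding cy by (simp add: power2_eq_square algebra_simps)
    ultimately show "x \<in> {x. (A * (c\<^sup>2 + b\<^sup>2)) * x\<^sup>2 + (2 * A * b * d + B * c\<^sup>2 - C * c * b) * x + (A * d\<^sup>2 - C * c * d + D * c\<^sup>2) = 0}"
      by simp
  qed
  ultimately have "infinite {x. (A * (c\<^sup>2 + b\<^sup>2)) * x\<^sup>2 + (2 * A * b * d + B * c\<^sup>2 - C * c * b) * x + (A * d\<^sup>2 - C * c * d + D * c\<^sup>2) = 0}"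
    using finite_subset by blast
  then have "A * (c\<^sup>2 + b\<^sup>2) = 0" using quad_zero by blast
  moreover have "c\<^sup>2 + b\<^sup>2 \<noteq> 0" using False by simp
  ultimately show ?thesis by (metis mult_eq_0_iff)
next
  case True
  then have b: "b \<noteq> 0" using bc by simp
  let ?S = "{p. b * fst p + c * snd p + d = 0 \<and> p \<in> gc (A,B,C,D)}"
  have fs: "fst p = - d / b" if "p \<in> ?S" for p
  proof -
    have "b * fst p + c * snd p + d = 0" using that by blast
    then have e: "b * fst p = - d" using True by simp
    have "fst p = (b * fst p) / b" using b by simp
    also have "\<dots> = - d / b" using e by simp
    finally show ?thesis .
  qed
  have "inj_on snd ?S"
  proof
    fix p q assume pq: "p \<in> ?S" "q \<in> ?S" "snd p = snd q"
    have "fst p = fst q" using fs[OF pq(1)] fs[OF pq(2)] by simp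
    then show "p = q" using pq(3) by (simp add: prod_eq_iff)
  qed
  then have "infinite (snd ` ?S)" using inf finite_imageD by blast
  moreover have "snd ` ?S \<subseteq> {y. A * y\<^sup>2 + C * y + (A * (d/b)\<^sup>2 - B * d / b + D) = 0}"
  proof
    fix y assume "y \<in> snd ` ?S"
    then obtain p where p: "p \<in> ?S" "y = snd p" by blast
    have x: "fst p = - d / b" using fs[OF p(1)] .
    have "A * ((fst p)\<^sup>2 + y\<^sup>2) + B * fst p + C * y + D = 0" using p by simp
    then show "y \<in> {y. A * y\<^sup>2 + C * y + (A * (d/b)\<^sup>2 - B * d / b + D) = 0}"
      unfolding x by (simp add: power2_eq_square algebra_simps)
  qed
  ultimately have "infinite {y. A * y\<^sup>2 + C * y + (A * (d/b)\<^sup>2 - B * d / b + D) = 0}"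
    using finite_subset by blast
  then show "A = 0" using quad_zero by blast
qed

lemma gc_comb0:
  assumes "p \<in> gc (A,B,C,D)" "p \<in> gc (A',B',C',D')" "s * A + t * A' = 0"
  shows "(s * B + t * B') * fst p + (s * C + t * C') * snd p + (s * D + t * D') = 0"
proof -
  have "s * (A * ((fst p)\<^sup>2 + (snd p)\<^sup>2) + B * fst p + C * snd p + D)
      + t * (A' * ((fst p)\<^sup>2 + (snd p)\<^sup>2) + B' * fst p + C' * snd p + D') = 0"
    using assms(1,2) by simp
  then have "(s * A + t * A') * ((fst p)\<^sup>2 + (snd p)\<^sup>2) + ((s * B + t * B') * fst p + (s * C + t * C') * snd p + (s * D + t * D')) = 0"
    by (simp add: algebra_simps)
  then show ?thesis using assms(3) by simp
qed


lemma I_nonempty: "infinite S \<Longrightarrow> \<exists>p. p \<in> S"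
  by (metis ex_in_conv finite.emptyI)

lemma gc_inter:
  assumes v0: "v \<noteq> 0" and w0: "w \<noteq> 0" and inf: "infinite (gc v \<inter> gc w)"
  shows "\<exists>c. v = c *\<^sub>R w"
proof -
  obtain A B C D where v: "v = (A,B,C,D)" by (cases v) auto
  obtain A' B' C' D' where w: "w = (A',B',C',D')" by (cases w) auto
  let ?I = "gc v \<inter> gc w"
  obtain p0 where p0: "p0 \<in> ?I" using I_nonempty[OF inf] by blast
  have s1: "A' *\<^sub>R v = A *\<^sub>R w"
  proof (rule ccontr)
    assume ne: "A' *\<^sub>R v \<noteq> A *\<^sub>R w"
    define b where "b = A' * B - A * B'"
    define c where "c = A' * C - A * C'"
    define d where "d = A' * D - A * D'"
    have lin: "b * fst p + c * snd p + d = 0" if "p \<in> ?I" for p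
      using gc_comb0[of p A B C D A' B' C' D' A' "-A"] that unfolding b_def c_def d_def v w
      by (simp add: algebra_simps)
    have bcd: "(b, c, d) \<noteq> (0,0,0)"
      using ne unfolding v w b_def c_def d_def by (auto simp: algebra_simps)
    show False
    proof (cases "b = 0 \<and> c = 0")
      case True
      then have "d = 0" using lin[OF p0] by simp
      then show False using True bcd by simp
    next
      case False
      then have bc: "b \<noteq> 0 \<or> c \<noteq> 0" by simp
      have "?I \<subseteq> {p. b * fst p + c * snd p + d = 0 \<and> p \<in> gc (A,B,C,D)}" using lin v by auto
      then have "A = 0" using line_circle[OF bc] inf finite_subset by blast
      have "?I \<subseteq> {p. b * fst p + c * snd p + d = 0 \<and> p \<in> gc (A',B',C',D')}" using lin w by auto
      then have "A' = 0" using line_circle[OF bc] inf finite_subset by blast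
      show False using ne \<open>A = 0\<close> \<open>A' = 0\<close> by simp
    qed
  qed
  show ?thesis
  proof (cases "A' = 0")
    case False
    have "v = inverse A' *\<^sub>R (A' *\<^sub>R v)" using False by simp
    also have "\<dots> = inverse A' *\<^sub>R (A *\<^sub>R w)" using s1 by simp
    also have "\<dots> = (A / A') *\<^sub>R w" by (simp add: divide_inverse mult.commute)
    finally show ?thesis by blast
  next
    case A'0: True
    have A0: "A = 0"
    proof (rule ccontr)
      assume "A \<noteq> 0"
      then have "w = 0" using s1 A'0 by simp
      then show False using w0 by simp
    qed
    have s2: "C' *\<^sub>R v = C *\<^sub>R w"
    proof (rule ccontr)
      assume ne: "C' *\<^sub>R v \<noteq> C *\<^sub>R w"
      define b where "b = C' * B - C * B'"
      define d where "d = C' * D - C * D'"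
      have lin: "b * fst p + 0 * snd p + d = 0" if "p \<in> ?I" for p
        using gc_comb0[of p A B C D A' B' C' D' C' "-C"] that A0 A'0 unfolding b_def d_def v w
        by (simp add: algebra_simps)
      have bd: "(b, d) \<noteq> (0,0)"
        using ne A0 A'0 unfolding v w b_def d_def by (auto simp: algebra_simps)
      have b0: "b \<noteq> 0"
      proof
        assume "b = 0"
        then have "d = 0" using lin[OF p0] by simp
        then show False using \<open>b = 0\<close> bd by simp
      qed
      have fs: "fst p = - d / b" if "p \<in> ?I" for p
      proof -
        have e: "b * fst p = - d" using lin[OF that] by simp
        have "fst p = (b * fst p) / b" using b0 by simp
        also have "\<dots> = - d / b" using e by simp
        finally show ?thesis .
      qed
      have inj: "inj_on snd ?I"
      proof
        fix p q assume pq: "p \<in> ?I" "q \<in> ?I" "snd p = snd q"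
        have "fst p = fst q" using fs[OF pq(1)] fs[OF pq(2)] by simp
        then show "p = q" using pq(3) by (simp add: prod_eq_iff)
      qed
      then have infs: "infinite (snd ` ?I)" using inf finite_imageD by blast
      have "snd ` ?I \<subseteq> {y. 0 * y\<^sup>2 + C * y + (B * (- d / b) + D) = 0}"
      proof
        fix y assume "y \<in> snd ` ?I"
        then obtain p where p: "p \<in> ?I" "y = snd p" by blast
        have "A * ((fst p)\<^sup>2 + (snd p)\<^sup>2) + B * fst p + C * snd p + D = 0" using p v by simp
        then show "y \<in> {y. 0 * y\<^sup>2 + C * y + (B * (- d / b) + D) = 0}" using fs[OF p(1)] p(2) A0 by simp
      qed
      then have "C = 0" using infs quad_zero finite_subset by blast
      have "snd ` ?I \<subseteq> {y. 0 * y\<^sup>2 + C' * y + (B' * (- d / b) + D') = 0}"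
      proof
        fix y assume "y \<in> snd ` ?I"
        then obtain p where p: "p \<in> ?I" "y = snd p" by blast
        have "A' * ((fst p)\<^sup>2 + (snd p)\<^sup>2) + B' * fst p + C' * snd p + D' = 0" using p w by simp
        then show "y \<in> {y. 0 * y\<^sup>2 + C' * y + (B' * (- d / b) + D') = 0}" using fs[OF p(1)] p(2) A'0 by simp
      qed
      then have "C' = 0" using infs quad_zero finite_subset by blast
      show False using ne \<open>C = 0\<close> \<open>C' = 0\<close> by simp
    qed
    show ?thesis
    proof (cases "C' = 0")
      case False
      have "v = inverse C' *\<^sub>R (C' *\<^sub>R v)" using False by simp
    also have "\<dots> = inverse C' *\<^sub>R (C *\<^sub>R w)" using s2 by simp
    also have "\<dots> = (C / C') *\<^sub>R w" by (simp add: divide_inverse mult.commute)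
    finally show ?thesis by blast
    next
      case C'0: True
      have C0: "C = 0"
      proof (rule ccontr)
        assume "C \<noteq> 0"
        then have "w = 0" using s2 C'0 by simp
        then show False using w0 by simp
      qed
      have pv: "B * fst p0 + D = 0" using p0 v A0 C0 by simp
      have pw: "B' * fst p0 + D' = 0" using p0 w A'0 C'0 by simp
      have B'0: "B' \<noteq> 0"
      proof
        assume "B' = 0"
        then have "D' = 0" using pw by simp
        then show False using w0 w A'0 C'0 \<open>B' = 0\<close> by (simp add: zero_prod_def)
      qed
      have "D = - B * fst p0" "D' = - B' * fst p0" using pv pw by linarith+
      then show ?thesis using B'0 A0 A'0 C0 C'0 unfolding v w
        by (intro exI[of _ "B / B'"]) (auto simp: field_simps)
    qed
  qed
qed


fun inv4 :: "vec4 \<Rightarrow> vec4" where "inv4 (A,B,C,D) = (D,B,-C,A)"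
fun tr4 :: "pt \<Rightarrow> vec4 \<Rightarrow> vec4" where
  "tr4 (a1,a2) (A,B,C,D) = (A, B + 2*A*a1, C + 2*A*a2, D + A*(a1\<^sup>2+a2\<^sup>2) + B*a1 + C*a2)"

lemma gc_tr:
  assumes "p \<in> gc v" shows "p - a \<in> gc (tr4 a v)"
proof -
  obtain A B C D where v: "v = (A,B,C,D)" by (cases v) auto
  obtain a1 a2 where a: "a = (a1,a2)" by (cases a) auto
  obtain x y where p: "p = (x,y)" by (cases p) auto
  have "A * (x\<^sup>2 + y\<^sup>2) + B * x + C * y + D = 0" using assms v p by simp
  moreover have "A * ((x - a1)\<^sup>2 + (y - a2)\<^sup>2) + (B + 2*A*a1) * (x - a1) + (C + 2*A*a2) * (y - a2) + (D + A*(a1\<^sup>2+a2\<^sup>2) + B*a1 + C*a2)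
      = A * (x\<^sup>2 + y\<^sup>2) + B * x + C * y + D" by (simp add: power2_eq_square algebra_simps)
  ultimately show ?thesis using v a p by simp
qed

lemma gc_iota:
  assumes "p \<in> gc v" "p \<noteq> 0" shows "iota p \<in> gc (inv4 v)"
proof -
  obtain A B C D where v: "v = (A,B,C,D)" by (cases v) auto
  obtain x y where p: "p = (x,y)" by (cases p) auto
  define r where "r = x\<^sup>2 + y\<^sup>2"
  have r0: "r \<noteq> 0" using assms(2) p unfolding r_def by (auto simp: zero_prod_def sum_power2_eq_zero_iff)
  have e: "A * r + B * x + C * y + D = 0" using assms(1) v p r_def by simp
  have ip: "iota p = (x / r, - y / r)" using p r_def by (simp add: iota_def)
  have "(x / r)\<^sup>2 + (- y / r)\<^sup>2 = r / r\<^sup>2" unfolding r_def by (simp add: power_divide add_divide_distrib)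
  also have "\<dots> = 1 / r" using r0 by (simp add: power2_eq_square)
  finally have s: "(x / r)\<^sup>2 + (- y / r)\<^sup>2 = 1 / r" .
  have "D * (1 / r) + B * (x / r) + (- C) * (- y / r) + A = (A * r + B * x + C * y + D) / r"
    using r0 by (simp add: field_simps)
  also have "\<dots> = 0" using e by simp
  finally show ?thesis using ip s v by simp
qed

lemma inv4_lin: "inv4 (v + c *\<^sub>R w) = inv4 v + c *\<^sub>R inv4 w"
  by (cases v, cases w) auto

lemma tr4_lin: "tr4 a (v + c *\<^sub>R w) = tr4 a v + c *\<^sub>R tr4 a w"
  by (cases a, cases v, cases w) (auto simp: algebra_simps)

lemma inv4_0: "inv4 v = 0 \<longleftrightarrow> v = 0"
  by (cases v) (auto simp: zero_prod_def)

lemma tr4_0: "tr4 a v = 0 \<longleftrightarrow> v = 0"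
  by (cases a, cases v) (auto simp: zero_prod_def)

lemma inv4_scale: "inv4 (c *\<^sub>R v) = c *\<^sub>R inv4 v"
  by (cases v) auto

lemma tr4_scale: "tr4 a (c *\<^sub>R v) = c *\<^sub>R tr4 a v"
  by (cases a, cases v) (auto simp: algebra_simps)

lemma gc_scale: "c \<noteq> 0 \<Longrightarrow> gc (c *\<^sub>R v) = gc v"
proof -
  assume c: "c \<noteq> 0"
  obtain A B C D where v: "v = (A,B,C,D)" by (cases v) auto
  have "c * A * ((fst p)\<^sup>2 + (snd p)\<^sup>2) + c * B * fst p + c * C * snd p + c * D
     = c * (A * ((fst p)\<^sup>2 + (snd p)\<^sup>2) + B * fst p + C * snd p + D)" for p
    by (simp add: algebra_simps)
  then show ?thesis using c v by auto
qed

definition isint4 :: "vec4 \<Rightarrow> bool" where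
  "isint4 v \<longleftrightarrow> fst v \<in> \<int> \<and> fst (snd v) \<in> \<int> \<and> fst (snd (snd v)) \<in> \<int> \<and> snd (snd (snd v)) \<in> \<int>"

lemma isint4_inv4: "isint4 v \<Longrightarrow> isint4 (inv4 v)"
  by (cases v) (auto simp: isint4_def)

lemma isint4_tr4: "isint4 v \<Longrightarrow> fst a \<in> \<int> \<Longrightarrow> snd a \<in> \<int> \<Longrightarrow> isint4 (tr4 a v)"
  by (cases a, cases v) (auto simp: isint4_def)




lemma iota_image_open:
  assumes "open Ob" "Ob \<subseteq> -{0}"
  shows "open (iota ` Ob)"
proof -
  have "iota ` Ob = {z \<in> -{0}. iota z \<in> Ob}"
  proof (intro set_eqI iffI)
    fix z assume "z \<in> iota ` Ob"
    then obtain w where "w \<in> Ob" "z = iota w" by blast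
    then show "z \<in> {z \<in> -{0}. iota z \<in> Ob}" using assms(2) by auto
  next
    fix z assume "z \<in> {z \<in> -{0}. iota z \<in> Ob}"
    then show "z \<in> iota ` Ob" by (metis (mono_tags, lifting) image_eqI iota_iota mem_Collect_eq)
  qed
  moreover have "open {z \<in> -{0}. iota z \<in> Ob}"
    using open_vimage_G[OF open_Compl[OF closed_singleton] cont_iota assms(1)] by simp
  ultimately show ?thesis by simp
qed

context cf begin

lemma Phi_open:
  assumes "open Ob" "Ob \<subseteq> G k"
  shows "open (Phi k ` Ob)"
proof -
  have e: "Phi k ` Ob = iota ` ((+) (la k) ` Ob)" by (auto simp: Phi_def image_comp add.commute)
  have "open ((+) (la k) ` Ob)" using assms(1) by (rule open_translation)
  moreover have "(+) (la k) ` Ob \<subseteq> -{0}" using assms(2) by (auto simp: G_def add.commute)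
  ultimately show ?thesis unfolding e by (rule iota_image_open)
qed

lemma Phi_inv: "y \<in> G k \<Longrightarrow> iota (Phi k y) = y + la k"
  by (simp add: Phi_def)

lemma Phi_nz: "y \<in> G k \<Longrightarrow> Phi k y \<noteq> 0"
  by (simp add: Phi_def G_def)

primrec Bk :: "nat \<Rightarrow> pt \<Rightarrow> pt" where
  "Bk 0 y = y"
| "Bk (Suc k) y = Bk k (Phi k y)"

primrec Wk :: "nat \<Rightarrow> pt set" where
  "Wk 0 = UNIV"
| "Wk (Suc k) = {y \<in> Kint \<inter> G k. Phi k y \<in> Wk k}"

lemma Wk_props:
  "open (Wk k) \<and> P k \<in> Wk k \<and> continuous_on (Wk k) (Bk k)
   \<and> (\<forall>Ob. open Ob \<longrightarrow> Ob \<subseteq> Wk k \<longrightarrow> open (Bk k ` Ob))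
   \<and> (\<forall>y \<in> Wk k. y \<in> Vs k \<longleftrightarrow> Bk k y \<in> Kdom \<alpha>)
   \<and> Bk k (P k) = P 0"
proof (induction k)
  case 0
  then show ?case by (auto intro: continuous_on_id)
next
  case (Suc k)
  then have IH1: "open (Wk k)" and IH2: "P k \<in> Wk k" and IH3: "continuous_on (Wk k) (Bk k)"
    and IH4: "\<And>Ob. open Ob \<Longrightarrow> Ob \<subseteq> Wk k \<Longrightarrow> open (Bk k ` Ob)"
    and IH5: "\<And>y. y \<in> Wk k \<Longrightarrow> y \<in> Vs k \<longleftrightarrow> Bk k y \<in> Kdom \<alpha>"
    and IH6: "Bk k (P k) = P 0" by auto
  have cP: "continuous_on (Kint \<inter> G k) (Phi k)" using cont_Phi continuous_on_subset by blast
  have oKG: "open (Kint \<inter> G k)" using open_Kint open_G by blast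
  have o: "open (Wk (Suc k))" using open_vimage_G[OF oKG cP IH1] by simp
  have PG: "P (Suc k) \<in> G k" using P_nz[of k] by (simp add: G_def P_Suc)
  have PPhi: "Phi k (P (Suc k)) = P k" using PG by (simp add: Phi_def P_Suc)
  have "Phi k (P (Suc k)) \<in> Wk k" using PPhi IH2 by (rule ssubst)
  then have p: "P (Suc k) \<in> Wk (Suc k)" unfolding Wk.simps using P_Suc_Kint[of k] PG by blast
  have c: "continuous_on (Wk (Suc k)) (Bk (Suc k))"
  proof -
    have "Wk (Suc k) \<subseteq> Kint \<inter> G k" by auto
    then have "continuous_on (Wk (Suc k)) (Phi k)" using continuous_on_subset[OF cP] by blast
    moreover have "Phi k ` Wk (Suc k) \<subseteq> Wk k" by auto
    ultimately have "continuous_on (Wk (Suc k)) (\<lambda>y. Bk k (Phi k y))"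
      using continuous_on_compose2[OF IH3] by blast
    then show ?thesis by simp
  qed
  have om: "open (Bk (Suc k) ` Ob)" if "open Ob" "Ob \<subseteq> Wk (Suc k)" for Ob
  proof -
    have "open (Phi k ` Ob)" using Phi_open[OF that(1)] that(2) by auto
    moreover have "Phi k ` Ob \<subseteq> Wk k" using that(2) by auto
    ultimately have "open (Bk k ` (Phi k ` Ob))" using IH4 by blast
    moreover have "Bk (Suc k) ` Ob = Bk k ` (Phi k ` Ob)" by (auto simp: image_comp)
    ultimately show ?thesis by simp
  qed
  have mem: "y \<in> Vs (Suc k) \<longleftrightarrow> Bk (Suc k) y \<in> Kdom \<alpha>" if "y \<in> Wk (Suc k)" for y
  proof -
    have yy: "y \<in> Kdom \<alpha>" "y \<in> G k" "Phi k y \<in> Wk k" using that Kint_sub by auto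
    have "y \<in> Vs (Suc k) \<longleftrightarrow> Phi k y \<in> Vs k" unfolding Vs_Suc' using yy by blast
    then show ?thesis using IH5[OF yy(3)] by simp
  qed
  have "Bk (Suc k) (P (Suc k)) = P 0" using PPhi IH6 by simp
  then show ?case using o p c om mem by blast
qed

definition step4 :: "nat \<Rightarrow> vec4 \<Rightarrow> vec4" where "step4 k v = tr4 (la k) (inv4 v)"

lemma step4_lin: "step4 k (v + c *\<^sub>R w) = step4 k v + c *\<^sub>R step4 k w"
  by (simp add: step4_def inv4_lin tr4_lin)

lemma step4_0: "step4 k v = 0 \<longleftrightarrow> v = 0"
  by (simp add: step4_def inv4_0 tr4_0)

lemma step4_scale: "step4 k (c *\<^sub>R v) = c *\<^sub>R step4 k v"
  by (simp add: step4_def inv4_scale tr4_scale)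

lemma gc_step4: "y \<in> G k \<Longrightarrow> Phi k y \<in> gc v \<Longrightarrow> y \<in> gc (step4 k v)"
proof -
  assume y: "y \<in> G k" "Phi k y \<in> gc v"
  have "iota (Phi k y) \<in> gc (inv4 v)" using gc_iota[OF y(2) Phi_nz[OF y(1)]] .
  then have "y + la k \<in> gc (inv4 v)" using Phi_inv[OF y(1)] by simp
  from gc_tr[OF this, of "la k"] show ?thesis by (simp add: step4_def)
qed

primrec wv :: "nat \<Rightarrow> vec4" where
  "wv 0 = (0, 0, 1, -(1 - \<alpha>))"
| "wv (Suc k) = step4 k (wv k)"

primrec pv :: "nat \<Rightarrow> vec4" where
  "pv 0 = (0, 0, 1, 0)"
| "pv (Suc k) = step4 k (pv k)"

primrec qv :: "nat \<Rightarrow> vec4" where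
  "qv 0 = (0, 0, 0, -1)"
| "qv (Suc k) = step4 k (qv k)"

lemma wv_pq: "wv k = pv k + (1 - \<alpha>) *\<^sub>R qv k"
  by (induction k) (auto simp: step4_lin)

lemma int_pq: "isint4 (pv k) \<and> isint4 (qv k)"
proof (induction k)
  case 0
  then show ?case by (simp add: isint4_def)
next
  case (Suc k)
  have "fst (la k) \<in> \<int>" "snd (la k) \<in> \<int>" by (auto simp: la_eq)
  then show ?case using Suc by (simp add: step4_def isint4_tr4 isint4_inv4)
qed

lemma indep_pq: "(s, t) \<noteq> (0, 0) \<Longrightarrow> s *\<^sub>R pv k + t *\<^sub>R qv k \<noteq> 0"
proof (induction k)
  case 0
  then show ?case by (simp add: zero_prod_def)
next
  case (Suc k)
  have "s *\<^sub>R pv (Suc k) + t *\<^sub>R qv (Suc k) = step4 k (s *\<^sub>R pv k + t *\<^sub>R qv k)"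
    using step4_lin[of k "s *\<^sub>R pv k" t "qv k"] step4_scale[of k s "pv k"] by simp
  then show ?case using Suc step4_0 by simp
qed

lemma wv_nz: "wv k \<noteq> 0"
  using indep_pq[of 1 "1 - \<alpha>" k] by (simp add: wv_pq)

lemma int_comb_zero:
  assumes "a \<in> \<int>" "b \<in> \<int>" "a + (1 - \<alpha>) * b = 0"
  shows "a = 0 \<and> b = 0"
proof -
  obtain m n where mn: "a = of_int m" "b = of_int n" using assms(1,2) by (auto elim!: Ints_cases)
  have "of_int n * (1 - \<alpha>) + of_int m = 0" using assms(3) mn by (simp add: algebra_simps)
  then have "(n, m) = (0, 0)" using nqlin[of n m] by blast
  then show ?thesis using mn by simp
qed

lemma wv_not_Z: "wv k \<noteq> c *\<^sub>R (0, 1, 0, 0)"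
proof
  assume h: "wv k = c *\<^sub>R (0, 1, 0, 0)"
  obtain p1 p2 p3 p4 where p: "pv k = (p1,p2,p3,p4)" by (cases "pv k") auto
  obtain q1 q2 q3 q4 where q: "qv k = (q1,q2,q3,q4)" by (cases "qv k") auto
  have ints: "p1 \<in> \<int>" "p2 \<in> \<int>" "p3 \<in> \<int>" "p4 \<in> \<int>" "q1 \<in> \<int>" "q2 \<in> \<int>" "q3 \<in> \<int>" "q4 \<in> \<int>"
    using int_pq[of k] p q by (auto simp: isint4_def)
  have e: "p1 + (1 - \<alpha>) * q1 = 0" "p3 + (1 - \<alpha>) * q3 = 0" "p4 + (1 - \<alpha>) * q4 = 0"
    using h wv_pq[of k] p q by auto
  have z: "p1 = 0" "q1 = 0" "p3 = 0" "q3 = 0" "p4 = 0" "q4 = 0"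
    using int_comb_zero[OF ints(1) ints(5) e(1)] int_comb_zero[OF ints(3) ints(7) e(2)]
      int_comb_zero[OF ints(4) ints(8) e(3)] by auto
  show False
  proof (cases "(q2, -p2) = (0, 0)")
    case True
    then have "1 *\<^sub>R pv k + 0 *\<^sub>R qv k = 0" using p z by (simp add: zero_prod_def)
    then show False using indep_pq[of 1 0 k] by simp
  next
    case False
    have "q2 *\<^sub>R pv k + (-p2) *\<^sub>R qv k = 0" using p q z by (simp add: zero_prod_def)
    then show False using indep_pq[OF False] by simp
  qed
qed

lemma Bk_gc: "y \<in> Wk k \<Longrightarrow> Bk k y \<in> gc (wv 0) \<Longrightarrow> y \<in> gc (wv k)"
proof (induction k arbitrary: y)
  case 0
  then show ?case by simp
next
  case (Suc k)
  then have "y \<in> G k" "Phi k y \<in> Wk k" by auto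
  then have "Phi k y \<in> gc (wv k)" using Suc by simp
  then show ?case using gc_step4[OF \<open>y \<in> G k\<close>] by simp
qed

definition Ak :: "nat \<Rightarrow> pt set" where
  "Ak k = {y \<in> Wk k. snd (Bk k y) = 1 - \<alpha> \<and> \<bar>fst (Bk k y)\<bar> < 1/2}"

lemma Ak_gc: "Ak k \<subseteq> gc (wv k)"
proof
  fix y assume y: "y \<in> Ak k"
  then have "Bk k y \<in> gc (wv 0)" by (simp add: Ak_def)
  then show "y \<in> gc (wv k)" using Bk_gc y by (simp add: Ak_def)
qed

lemma P_Ak: "P k \<in> Ak k"
  using Wk_props[of k] by (simp add: Ak_def P_def)

end




context cf begin

lemma dist_vert: "dist (x, y) (x, z) = \<bar>y - z\<bar>"
  by (simp add: dist_Pair_Pair dist_real_def)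

lemma dist_horz: "dist (x, y) (z, y) = \<bar>x - z\<bar>"
  by (simp add: dist_Pair_Pair dist_real_def)

lemma Ak_inf: "infinite (Ak k)"
proof
  assume fin: "finite (Ak k)"
  have W: "open (Wk k)" "P k \<in> Wk k" "Bk k (P k) = P 0"
    and om: "\<And>Ob. open Ob \<Longrightarrow> Ob \<subseteq> Wk k \<Longrightarrow> open (Bk k ` Ob)"
    using Wk_props[of k] by auto
  have "open (Bk k ` Wk k)" using om[OF W(1)] by simp
  moreover have "P 0 \<in> Bk k ` Wk k" using W by (metis image_eqI)
  ultimately obtain e where e: "e > 0" "ball (P 0) e \<subseteq> Bk k ` Wk k"
    using open_contains_ball by blast
  define e' where "e' = min e (1/2)"
  have e'0: "e' > 0" using e by (simp add: e'_def)
  have sub: "(\<lambda>t. (t, 1 - \<alpha>)) ` {0<..<e'} \<subseteq> Bk k ` Ak k"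
  proof
    fix z assume "z \<in> (\<lambda>t. (t, 1 - \<alpha>)) ` {0<..<e'}"
    then obtain t where t: "0 < t" "t < e'" "z = (t, 1 - \<alpha>)" by auto
    have "dist (P 0) z = \<bar>0 - t\<bar>" using t(3) by (simp add: P_def dist_horz)
    then have "z \<in> ball (P 0) e" using t by (simp add: e'_def)
    then obtain y where y: "y \<in> Wk k" "Bk k y = z" using e(2) by blast
    have "y \<in> Ak k" using y t by (simp add: Ak_def e'_def)
    then show "z \<in> Bk k ` Ak k" using y by blast
  qed
  have "infinite ((\<lambda>t. (t, 1 - \<alpha>)) ` {0<..<e'})"
  proof
    assume "finite ((\<lambda>t. (t, 1 - \<alpha>)) ` {0<..<e'})"
    moreover have "inj_on (\<lambda>t. (t, 1 - \<alpha>)) {0<..<e'}" by (auto simp: inj_on_def)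
    ultimately have "finite {0<..<e'}" using finite_imageD by blast
    then show False using e'0 infinite_Ioo[of 0 e'] by simp
  qed
  then show False using sub fin finite_subset by blast
qed

lemma Ak_two_sided:
  assumes p: "p \<in> Ak k" and Ob: "open Ob" "p \<in> Ob"
  shows "(\<exists>O1. open O1 \<and> O1 \<noteq> {} \<and> O1 \<subseteq> Ob \<inter> Vs k) \<and> (\<exists>O2. open O2 \<and> O2 \<noteq> {} \<and> O2 \<subseteq> Ob - Vs k)"
proof -
  have W: "open (Wk k)" and cB: "continuous_on (Wk k) (Bk k)"
    and om: "\<And>Ob. open Ob \<Longrightarrow> Ob \<subseteq> Wk k \<Longrightarrow> open (Bk k ` Ob)"
    and mem: "\<And>y. y \<in> Wk k \<Longrightarrow> y \<in> Vs k \<longleftrightarrow> Bk k y \<in> Kdom \<alpha>"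
    using Wk_props[of k] by auto
  let ?O = "Ob \<inter> Wk k"
  have oO: "open ?O" using Ob(1) W by blast
  have cO: "continuous_on ?O (Bk k)" using continuous_on_subset[OF cB] by blast
  have pO: "p \<in> ?O" using p Ob(2) by (simp add: Ak_def)
  obtain x0 where q: "Bk k p = (x0, 1 - \<alpha>)" "\<bar>x0\<bar> < 1/2"
    using p by (cases "Bk k p") (auto simp: Ak_def)
  have "open (Bk k ` ?O)" using om[OF oO] by blast
  moreover have "Bk k p \<in> Bk k ` ?O" using pO by blast
  ultimately obtain e where e: "e > 0" "ball (Bk k p) e \<subseteq> Bk k ` ?O"
    using open_contains_ball by blast
  define d where "d = min (e/2) (1/2)"
  have d: "0 < d" "d < e" "d \<le> 1/2" using e by (auto simp: d_def)
  have "dist (Bk k p) (x0, 1 - \<alpha> - d) = \<bar>(1 - \<alpha>) - (1 - \<alpha> - d)\<bar>" unfolding q(1) by (rule dist_vert)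
  then have q1: "(x0, 1 - \<alpha> - d) \<in> ball (Bk k p) e" using d by simp
  then have "(x0, 1 - \<alpha> - d) \<in> Bk k ` ?O" using e(2) by (rule subsetD[rotated])
  then obtain y1 where y1: "y1 \<in> ?O" "Bk k y1 = (x0, 1 - \<alpha> - d)" by (metis imageE)
  have "dist (Bk k p) (x0, 1 - \<alpha> + d) = \<bar>(1 - \<alpha>) - (1 - \<alpha> + d)\<bar>" unfolding q(1) by (rule dist_vert)
  then have q2: "(x0, 1 - \<alpha> + d) \<in> ball (Bk k p) e" using d by simp
  then have "(x0, 1 - \<alpha> + d) \<in> Bk k ` ?O" using e(2) by (rule subsetD[rotated])
  then obtain y2 where y2: "y2 \<in> ?O" "Bk k y2 = (x0, 1 - \<alpha> + d)" by (metis imageE)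
  let ?O1 = "{y \<in> ?O. Bk k y \<in> Kint}"
  let ?O2 = "{y \<in> ?O. Bk k y \<in> - Kc}"
  have "open ?O1" using open_vimage_G[OF oO cO open_Kint] .
  moreover have "-1/2 < x0" "x0 < 1/2" using q(2) by linarith+
  moreover have "y1 \<in> ?O1" using y1 \<open>-1/2 < x0\<close> \<open>x0 < 1/2\<close> d a0 a1 by (simp add: Kint_def)
  moreover have "?O1 \<subseteq> Ob \<inter> Vs k" using mem Kint_sub by blast
  moreover have "open ?O2" using open_vimage_G[OF oO cO open_Compl[OF closed_Kc]] .
  moreover have "y2 \<in> ?O2" using y2 d by (simp add: Kc_def)
  moreover have "?O2 \<subseteq> Ob - Vs k" using mem K_sub_Kc by blast
  ultimately show ?thesis by (metis (no_types, lifting) empty_iff)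
qed

definition CS0 :: "vec4 set" where
  "CS0 = {(0,1,0,1/2), (0,1,0,-1/2), (0,0,1,\<alpha>), (0,0,1,-(1-\<alpha>))}"

lemma CS0_props: "finite CS0" "0 \<notin> CS0"
  by (auto simp: CS0_def zero_prod_def)

lemma frontier_K_bound: "frontier (Kdom \<alpha>) \<subseteq> \<Union>(gc ` CS0)"
proof
  fix y assume y: "y \<in> frontier (Kdom \<alpha>)"
  obtain a b where ab: "y = (a, b)" by (cases y) auto
  have "y \<in> Kc" using y closure_K by (auto simp: frontier_def)
  moreover have "y \<notin> Kint" using y interior_K by (auto simp: frontier_def)
  ultimately have "a = -1/2 \<or> a = 1/2 \<or> b = -\<alpha> \<or> b = 1 - \<alpha>"
    using ab by (auto simp: Kc_def Kint_def)
  then show "y \<in> \<Union>(gc ` CS0)" using ab by (auto simp: CS0_def)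
qed

lemma frontier_bound:
  "\<exists>CS FS. finite CS \<and> 0 \<notin> CS \<and> finite FS \<and> frontier (Vs k) \<subseteq> \<Union>(gc ` CS) \<union> FS"
proof (induction k)
  case 0
  then show ?case using frontier_K_bound CS0_props by (intro exI[of _ CS0] exI[of _ "{}"]) auto
next
  case (Suc k)
  then obtain CS FS where C: "finite CS" "0 \<notin> CS" "finite FS" "frontier (Vs k) \<subseteq> \<Union>(gc ` CS) \<union> FS"
    by blast
  let ?CS = "CS0 \<union> step4 k ` CS"
  let ?FS = "insert (- la k) ((\<lambda>z. iota z - la k) ` FS)"
  have "finite ?CS" using C CS0_props by simp
  moreover have "0 \<notin> ?CS" using C CS0_props step4_0 by auto
  moreover have "finite ?FS" using C by simp
  moreover have "frontier (Vs (Suc k)) \<subseteq> \<Union>(gc ` ?CS) \<union> ?FS"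
  proof
    fix y assume y: "y \<in> frontier (Vs (Suc k))"
    then have "y \<in> frontier (Kdom \<alpha>) \<or> y \<in> frontier {y \<in> G k. Phi k y \<in> Vs k}"
      using frontier_Int_subset unfolding Vs_Suc' by blast
    then show "y \<in> \<Union>(gc ` ?CS) \<union> ?FS"
    proof
      assume "y \<in> frontier (Kdom \<alpha>)"
      then show ?thesis using frontier_K_bound by blast
    next
      assume "y \<in> frontier {y \<in> G k. Phi k y \<in> Vs k}"
      then have "y \<in> (- G k) \<union> {y \<in> G k. Phi k y \<in> frontier (Vs k)}"
        using frontier_vimage[OF open_G cont_Phi] by blast
      then show ?thesis
      proof
        assume "y \<in> - G k"
        then have "y + la k = 0" by (simp add: G_def)
        then have "y = - la k" using eq_neg_iff_add_eq_0 by blast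
        then show ?thesis by simp
      next
        assume "y \<in> {y \<in> G k. Phi k y \<in> frontier (Vs k)}"
        then have yG: "y \<in> G k" and f: "Phi k y \<in> \<Union>(gc ` CS) \<union> FS" using C(4) by auto
        from f show ?thesis
        proof
          assume "Phi k y \<in> \<Union>(gc ` CS)"
          then obtain c where "c \<in> CS" "Phi k y \<in> gc c" by blast
          then have "y \<in> gc (step4 k c)" "step4 k c \<in> ?CS" using gc_step4[OF yG] by auto
          then show ?thesis by blast
        next
          assume "Phi k y \<in> FS"
          moreover have "y = iota (Phi k y) - la k" using Phi_inv[OF yG] by simp
          ultimately show ?thesis by blast
        qed
      qed
    qed
  qed
  ultimately show ?case by blast
qed

lemma P_inj: "inj P"
  by (auto simp: inj_def P_def ys_inj)

lemma core:
  assumes S: "infinite S"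
  shows "\<exists>k\<in>S. \<exists>l\<in>S. \<exists>Ob. open Ob \<and> Ob \<noteq> {} \<and> Ob \<subseteq> (Vs k - Vs l) \<union> (Vs l - Vs k)"
proof -
  obtain l where l: "l \<in> S" using S by (metis ex_in_conv finite.emptyI)
  obtain CS FS where C: "finite CS" "0 \<notin> CS" "finite FS" "frontier (Vs l) \<subseteq> \<Union>(gc ` CS) \<union> FS"
    using frontier_bound[of l] by (elim exE conjE) auto
  let ?F = "\<Union>(gc ` CS) \<union> FS"
  have ex: "\<exists>k\<in>S. \<not> Ak k \<subseteq> ?F"
  proof (rule ccontr)
    assume "\<not> ?thesis"
    then have all: "\<And>k. k \<in> S \<Longrightarrow> Ak k \<subseteq> ?F" by blast
    have exc: "\<exists>c. c \<in> CS \<and> infinite (gc c \<inter> Ak k)" if k: "k \<in> S" for k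
    proof (rule ccontr)
      assume "\<not> ?thesis"
      then have fin: "\<And>c. c \<in> CS \<Longrightarrow> finite (gc c \<inter> Ak k)" by blast
      have "Ak k - FS \<subseteq> (\<Union>c\<in>CS. gc c \<inter> Ak k)" using all[OF k] by blast
      moreover have "finite (\<Union>c\<in>CS. gc c \<inter> Ak k)" using C(1) fin by blast
      ultimately have "finite (Ak k - FS)" using finite_subset by blast
      then have "finite (Ak k)" using C(3) by (metis Diff_infinite_finite)
      then show False using Ak_inf by blast
    qed
    define f where "f k = (SOME c. c \<in> CS \<and> infinite (gc c \<inter> Ak k))" for k
    have f: "f k \<in> CS \<and> infinite (gc (f k) \<inter> Ak k)" if "k \<in> S" for k
      unfolding f_def using someI_ex[OF exc[OF that]] .
    have "f ` S \<subseteq> CS" using f by blast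
    then have "finite (f ` S)" using C(1) finite_subset by blast
    then obtain k0 where k0: "k0 \<in> S" "infinite {k \<in> S. f k = f k0}"
      using pigeonhole_infinite[OF S] by blast
    define c where "c = f k0"
    define S' where "S' = {k \<in> S. f k = c}"
    have c0: "c \<noteq> 0" using f[OF k0(1)] C(2) unfolding c_def by auto
    have gck: "gc (wv k) = gc c" if "k \<in> S'" for k
    proof -
      have "infinite (gc c \<inter> Ak k)" using f that unfolding S'_def by auto
      moreover have "gc c \<inter> Ak k \<subseteq> gc (wv k) \<inter> gc c" using Ak_gc by blast
      ultimately have "infinite (gc (wv k) \<inter> gc c)" using finite_subset by blast
      then obtain lam where lam: "wv k = lam *\<^sub>R c" using gc_inter[OF wv_nz c0] by blast
      have "lam \<noteq> 0" using lam wv_nz[of k] by auto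
      then show ?thesis using lam gc_scale by simp
    qed
    have "P ` S' \<subseteq> gc c \<inter> gc (0, 1, 0, 0)"
    proof
      fix z assume "z \<in> P ` S'"
      then obtain k where k: "k \<in> S'" "z = P k" by blast
      have "z \<in> gc c" using P_Ak[of k] Ak_gc[of k] gck[OF k(1)] k(2) by blast
      moreover have "z \<in> gc (0, 1, 0, 0)" using k(2) by (simp add: P_def)
      ultimately show "z \<in> gc c \<inter> gc (0, 1, 0, 0)" by blast
    qed
    moreover have "infinite (P ` S')"
      using k0(2) P_inj finite_imageD[of P S'] inj_on_subset[of P UNIV S'] unfolding S'_def c_def by auto
    ultimately have "infinite (gc c \<inter> gc (0, 1, 0, 0))" using finite_subset by blast
    then obtain mu where mu: "c = mu *\<^sub>R (0, 1, 0, 0)"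
      using gc_inter[OF c0, of "(0,1,0,0)"] by (auto simp: zero_prod_def)
    have "k0 \<in> S'" using k0(1) unfolding S'_def c_def by simp
    then have "infinite (gc c \<inter> Ak k0)" using f unfolding S'_def by auto
    moreover have "gc c \<inter> Ak k0 \<subseteq> gc (wv k0) \<inter> gc c" using Ak_gc by blast
    ultimately have "infinite (gc (wv k0) \<inter> gc c)" using finite_subset by blast
    then obtain lam where "wv k0 = lam *\<^sub>R c" using gc_inter[OF wv_nz c0] by blast
    then have "wv k0 = (lam * mu) *\<^sub>R (0, 1, 0, 0)" using mu by simp
    then show False using wv_not_Z by blast
  qed
  then obtain k p where k: "k \<in> S" "p \<in> Ak k" "p \<notin> ?F" by blast
  have pf: "p \<notin> frontier (Vs l)" using k(3) C(4) by blast
  show ?thesis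
  proof (cases "p \<in> interior (Vs l)")
    case True
    obtain O2 where "open O2" "O2 \<noteq> {}" "O2 \<subseteq> interior (Vs l) - Vs k"
      using Ak_two_sided[OF k(2) open_interior True] by blast
    then show ?thesis using k(1) l interior_subset by blast
  next
    case False
    then have "p \<in> - closure (Vs l)" using pf by (auto simp: frontier_def)
    then obtain O1 where "open O1" "O1 \<noteq> {}" "O1 \<subseteq> - closure (Vs l) \<inter> Vs k"
      using Ak_two_sided[OF k(2) open_Compl[OF closed_closure]] by blast
    then show ?thesis using k(1) l closure_subset by blast
  qed
qed

end




lemma iota_diff: "x \<noteq> 0 \<Longrightarrow> iota differentiable (at x)"
proof -
  assume x: "x \<noteq> 0"
  have f: "fst differentiable (at x)" "snd differentiable (at x)"
    using bounded_linear_imp_differentiable bounded_linear_fst bounded_linear_snd by blast+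
  have r: "(fst x)\<^sup>2 + (snd x)\<^sup>2 \<noteq> 0" using sumsq_nz[OF x] .
  have "(\<lambda>p. (fst p / ((fst p)\<^sup>2 + (snd p)\<^sup>2), - snd p / ((fst p)\<^sup>2 + (snd p)\<^sup>2))) differentiable (at x)"
    using f r by (intro differentiable_Pair differentiable_divide differentiable_minus differentiable_add differentiable_power) auto
  then show ?thesis unfolding iota_def[abs_def] by simp
qed

lemma neg_iota: "negligible S \<Longrightarrow> negligible (iota ` (S - {0}))"
proof -
  assume S: "negligible S"
  have "negligible (S - {0})" using negligible_subset[OF S] by blast
  moreover have "iota differentiable_on (S - {0})"
    by (rule differentiable_at_imp_differentiable_on) (auto intro: iota_diff)
  ultimately show ?thesis using negligible_differentiable_image_negligible[OF order_refl] by blast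
qed

lemma neg_Tmap: "negligible S \<Longrightarrow> negligible (Tmap a ` S)"
proof -
  assume S: "negligible S"
  let ?N = "iota ` (S - {0})"
  have N: "negligible ?N" using neg_iota[OF S] .
  have "Tmap a ` S \<subseteq> {0} \<union> (\<Union>z\<in>(UNIV :: (int \<times> int) set). (+) (- latt z) ` ?N)"
  proof
    fix y assume "y \<in> Tmap a ` S"
    then obtain x where x: "x \<in> S" "y = Tmap a x" by blast
    show "y \<in> {0} \<union> (\<Union>z\<in>(UNIV :: (int \<times> int) set). (+) (- latt z) ` ?N)"
    proof (cases "x = 0")
      case True
      then show ?thesis using x by (simp add: Tmap_def)
    next
      case False
      then have "y = - latt (nearest a (iota x)) + iota x" using x by (simp add: Tmap_def)
      moreover have "iota x \<in> ?N" using x False by blast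
      ultimately show ?thesis by blast
    qed
  qed
  moreover have "negligible ({0} \<union> (\<Union>z\<in>(UNIV :: (int \<times> int) set). (+) (- latt z) ` ?N))"
  proof -
    have "negligible (\<Union>z\<in>(UNIV :: (int \<times> int) set). (+) (- latt z) ` ?N)"
    proof (rule negligible_countable_Union)
      show "countable ((\<lambda>z. (+) (- latt z) ` ?N) ` (UNIV :: (int \<times> int) set))" by simp
    next
      fix X assume "X \<in> (\<lambda>z. (+) (- latt z) ` ?N) ` (UNIV :: (int \<times> int) set)"
      then obtain z where "X = (+) (- latt z) ` ?N" by blast
      moreover have "(+) (- latt z) ` ?N = (\<lambda>x. x - latt z) ` ?N" by (auto simp: algebra_simps)
      ultimately show "negligible X" using negligible_translation[OF N, of "- latt z"] by simp
    qed
    then show ?thesis by simp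
  qed
  ultimately show ?thesis using negligible_subset by blast
qed

lemma convex_K: "convex (Kdom a)"
proof -
  have "Kdom a = {-1/2<..1/2} \<times> {-a<..1-a}" by (auto simp: Kdom_def)
  then show ?thesis by (simp add: convex_Times)
qed

lemma neg_Eset: "negligible (Eset a n)"
proof (induction n)
  case 0
  then show ?case using negligible_convex_frontier[OF convex_K] by simp
next
  case (Suc n)
  then show ?case using neg_Tmap[OF Suc] by simp
qed

lemma neg_Eall: "negligible (Eall a)"
  unfolding Eall_def by (rule negligible_countable_Union) (auto intro: neg_Eset)

context cf begin

lemma not_serendipitous: "\<not> serendipitous \<alpha>"
proof
  assume "serendipitous \<alpha>"
  then have fin: "finite (components (Kdom \<alpha> - Eall \<alpha>))" by (simp add: serendipitous_def)
  let ?C = "components (Kdom \<alpha> - Eall \<alpha>)"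
  have rep: "Vs k - Eall \<alpha> = \<Union>{W \<in> ?C. W \<subseteq> Vs k}" for k
  proof
    show "\<Union>{W \<in> ?C. W \<subseteq> Vs k} \<subseteq> Vs k - Eall \<alpha>" using in_components_subset by blast
  next
    show "Vs k - Eall \<alpha> \<subseteq> \<Union>{W \<in> ?C. W \<subseteq> Vs k}"
    proof
      fix y assume y: "y \<in> Vs k - Eall \<alpha>"
      then have "y \<in> Kdom \<alpha> - Eall \<alpha>" using Vs_sub by blast
      then obtain W where W: "W \<in> ?C" "y \<in> W" using Union_components by blast
      have "W \<subseteq> Vs k"
      proof (rule ccontr)
        assume "\<not> W \<subseteq> Vs k"
        then have "W - Vs k \<noteq> {}" by blast
        moreover have "W \<inter> Vs k \<noteq> {}" using y W by blast
        ultimately have "W \<inter> frontier (Vs k) \<noteq> {}"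
          using connected_Int_frontier[OF in_components_connected[OF W(1)]] by blast
        moreover have "W \<inter> Eall \<alpha> = {}" using in_components_subset[OF W(1)] by blast
        ultimately show False using frontier_Vs_E by blast
      qed
      then show "y \<in> \<Union>{W \<in> ?C. W \<subseteq> Vs k}" using W by blast
    qed
  qed
  define h where "h k = {W \<in> ?C. W \<subseteq> Vs k}" for k
  have "h ` UNIV \<subseteq> Pow ?C" by (auto simp: h_def)
  then have "finite (h ` UNIV)" by (rule finite_subset) (simp add: fin)
  then obtain k0 where k0: "infinite {k \<in> UNIV. h k = h k0}"
    using pigeonhole_infinite[of "UNIV :: nat set" h] by auto
  then obtain k l Ob where kl: "k \<in> {k \<in> UNIV. h k = h k0}" "l \<in> {k \<in> UNIV. h k = h k0}"
    and Ob: "open Ob" "Ob \<noteq> {}" "Ob \<subseteq> (Vs k - Vs l) \<union> (Vs l - Vs k)"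
    using core[OF k0] by blast
  have "Vs k - Eall \<alpha> = Vs l - Eall \<alpha>" using rep[of k] rep[of l] kl by (simp add: h_def)
  then have "Ob \<subseteq> Eall \<alpha>" using Ob(3) by blast
  then have "negligible Ob" using neg_Eall negligible_subset by blast
  then show False using open_not_negligible[OF Ob(1,2)] by blast
qed

lemma not_finite_range: "\<not> finite_range \<alpha>"
proof
  assume "finite_range \<alpha>"
  then obtain UU :: "pt set set" where UU: "finite UU"
    and cov: "\<And>s. cyl \<alpha> s \<noteq> {} \<Longrightarrow> \<exists>U\<in>UU. let V = (Tmap \<alpha> ^^ length s) ` cyl \<alpha> s in
                     (V - U) \<union> (U - V) \<in> null_sets lebesgue"
    unfolding finite_range_def by blast
  have ex: "\<exists>U\<in>UU. negligible ((Vs k - U) \<union> (U - Vs k))" for k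
  proof -
    have "Vs k \<noteq> {}" using P_in_Vs by blast
    then have "cyl \<alpha> (sdig k) \<noteq> {}" using Vs_eq[of k] by auto
    from cov[OF this] show ?thesis using Vs_eq[of k] by (simp add: Let_def negligible_iff_null_sets)
  qed
  define g where "g k = (SOME U. U \<in> UU \<and> negligible ((Vs k - U) \<union> (U - Vs k)))" for k
  have g: "g k \<in> UU \<and> negligible ((Vs k - g k) \<union> (g k - Vs k))" for k
    unfolding g_def using someI_ex[OF ex[of k, unfolded Bex_def]] .
  have "g ` UNIV \<subseteq> UU" using g by blast
  then have "finite (g ` UNIV)" by (rule finite_subset) (simp add: UU)
  then obtain k0 where k0: "infinite {k \<in> UNIV. g k = g k0}"
    using pigeonhole_infinite[of "UNIV :: nat set" g] by auto
  then obtain k l Ob where kl: "k \<in> {k \<in> UNIV. g k = g k0}" "l \<in> {k \<in> UNIV. g k = g k0}"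
    and Ob: "open Ob" "Ob \<noteq> {}" "Ob \<subseteq> (Vs k - Vs l) \<union> (Vs l - Vs k)"
    using core[OF k0] by blast
  have "Ob \<subseteq> ((Vs k - g k) \<union> (g k - Vs k)) \<union> ((Vs l - g l) \<union> (g l - Vs l))"
    using Ob(3) kl by auto
  moreover have "negligible (((Vs k - g k) \<union> (g k - Vs k)) \<union> ((Vs l - g l) \<union> (g l - Vs l)))"
    using g[of k] g[of l] by simp
  ultimately have "negligible Ob" using negligible_subset by blast
  then show False using open_not_negligible[OF Ob(1,2)] by blast
qed

end

theorem corollary3p9:
  fixes \<alpha> :: real
  assumes "0 < \<alpha>" and "\<alpha> < 1"
    and "\<not> (\<exists>a b c :: int. (a, b, c) \<noteq> (0, 0, 0) \<and> of_int a * \<alpha>\<^sup>2 + of_int b * \<alpha> + of_int c = 0)"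
  shows "\<not> serendipitous \<alpha> \<and> \<not> finite_range \<alpha>"
proof -
  interpret cf \<alpha> using assms by unfold_locales
  show ?thesis using not_serendipitous not_finite_range by blast
qed


end
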